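(* For $1\le k\le m<2n$, $\sigma_k^m:=p(v(k,m),v(k,m))$ equals $q^2$ if $m=\phi(k)$, and equals $q$ otherwise.
   Context: Let $\mathbf{k}$ be a field, $G$ an abelian group, $n\ge2$, $g_1,\dots,g_n\in G$, characters $\chi^1,\dots,\chi^n:G\to\mathbf{k}^*$, $p_{ij}=\chi^i(g_j)$. Fix $q\in\mathbf{k}^*$ and assume $p_{ii}=q$ ($1\le i<n$), $p_{nn}=q^2$, $p_{i,i-1}p_{i-1,i}=q^{-1}$ ($1<i<n$), $p_{n-1,n}p_{n,n-1}=q^{-2}$, $p_{ij}p_{ji}=1$ ($j>i+1$). For words $u,v$ in $x_1,\dots,x_n$, $p(u,v)=\chi^u(g_v)$, where $g_v$ (resp. $\chi^u$) is obtained by replacing each $x_i$ by $g_i$ (resp. $\chi^i$); $p$ is bimultiplicative. For $n<i<2n$, $x_i:=x_{2n-i}$; $\phi(i)=2n-i$; $v(k,m)$ is the word $x_kx_{k+1}\cdots x_m$. *)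

theory Defs
  imports Main
begin

text \<open>Words in the letters x_1,...,x_n are lists of indices.\<close>

definition is_character :: "('g::ab_group_add \<Rightarrow> 'k::field) \<Rightarrow> bool" where
  "is_character c \<longleftrightarrow> (\<forall>a b. c (a + b) = c a * c b) \<and> (\<forall>a. c a \<noteq> 0)"

definition g_word :: "(nat \<Rightarrow> 'g::ab_group_add) \<Rightarrow> nat list \<Rightarrow> 'g" where
  "g_word g v = sum_list (map g v)"

definition chi_word :: "(nat \<Rightarrow> 'g \<Rightarrow> 'k::field) \<Rightarrow> nat list \<Rightarrow> 'g \<Rightarrow> 'k" where
  "chi_word chi u h = prod_list (map (\<lambda>i. chi i h) u)"

definition pw :: "(nat \<Rightarrow> 'g::ab_group_add \<Rightarrow> 'k::field) \<Rightarrow> (nat \<Rightarrow> 'g) \<Rightarrow> nat list \<Rightarrow> nat list \<Rightarrow> 'k" where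
  "pw chi g u v = chi_word chi u (g_word g v)"

text \<open>Letter index: x_i := x_{2n-i} for n < i < 2n.\<close>
definition letter :: "nat \<Rightarrow> nat \<Rightarrow> nat" where
  "letter n i = (if i \<le> n then i else 2 * n - i)"

definition vw :: "nat \<Rightarrow> nat \<Rightarrow> nat \<Rightarrow> nat list" where
  "vw n k m = map (letter n) [k..<Suc m]"

definition phi :: "nat \<Rightarrow> nat \<Rightarrow> nat" where
  "phi n i = 2 * n - i"

end

theory Submission
  imports Defs
begin

lemma char_zero: "is_character c \<Longrightarrow> c 0 = 1"
  unfolding is_character_def
  by (metis add_0 mult_cancel_right2)

lemma char_sum: "is_character c \<Longrightarrow> c (sum_list (map g v)) = prod_list (map (\<lambda>y. c (g y)) v)"
  by (induction v) (auto simp: char_zero is_character_def)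

lemma pw_expand: "(\<forall>x\<in>set u. is_character (chi x)) \<Longrightarrow>
  pw chi g u v = prod_list (map (\<lambda>x. prod_list (map (\<lambda>y. chi x (g y)) v)) u)"
  unfolding pw_def chi_word_def g_word_def
  by (induction u) (auto simp: char_sum)

lemma prod_list_mult: "prod_list (map (\<lambda>x. f x * (h x :: 'k::comm_monoid_mult)) u) = prod_list (map f u) * prod_list (map h u)"
  by (induction u) (auto simp: ac_simps)

lemma Q_snoc:
  fixes P :: "nat \<Rightarrow> nat \<Rightarrow> 'k::comm_monoid_mult"
  shows "prod_list (map (\<lambda>x. prod_list (map (\<lambda>y. P x y) (u@[b]))) (u@[b]))
   = prod_list (map (\<lambda>x. prod_list (map (\<lambda>y. P x y) u)) u) * prod_list (map (\<lambda>x. P x b * P b x) u) * P b b"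
  by (simp add: prod_list_mult ac_simps)

lemma powi_list: "(q::'k::field) \<noteq> 0 \<Longrightarrow> prod_list (map (\<lambda>x. q powi f x) u) = q powi sum_list (map f u)"
  by (induction u) (auto simp: power_int_add)

definition aa :: "nat \<Rightarrow> nat \<Rightarrow> int" where
  "aa i j = (if i = j then 2 else if i = j + 1 \<or> j = i + 1 then -1 else 0)"

definition ee :: "nat \<Rightarrow> nat \<Rightarrow> nat \<Rightarrow> int" where
  "ee n x y = (if x = y then (if x = n then 4 else 2)
     else if (x = n - 1 \<and> y = n) \<or> (y = n - 1 \<and> x = n) then -2
     else if x = y + 1 \<or> y = x + 1 then -1 else 0)"

definition dd :: "nat \<Rightarrow> nat \<Rightarrow> int" where
  "dd n x = (if x = n then 2 else 1)"

lemma aa_ge: "i \<le> J \<Longrightarrow> aa i J = (if i = J then 2 else if J = i + 1 then -1 else 0)"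
  unfolding aa_def by auto

lemma aa_refl: "i \<le> n \<Longrightarrow> j \<le> n \<Longrightarrow> aa i (2*n - j) = (if i = n \<and> j = n then 2 else if i + j + 1 = 2*n then -1 else 0)"
proof -
  assume a: "i \<le> n" "j \<le> n"
  have "i \<le> 2*n - j" using a by linarith
  then have e: "aa i (2*n - j) = (if i = 2*n - j then 2 else if 2*n - j = i + 1 then -1 else 0)" by (rule aa_ge)
  have f1: "(i = 2*n - j) = (i = n \<and> j = n)" using a by linarith
  have f2: "(2*n - j = i + 1) = (i + j + 1 = 2*n)" using a by linarith
  show ?thesis unfolding e f1 f2 ..
qed

lemma c1: "n \<ge> 2 \<Longrightarrow> 1 \<le> i \<Longrightarrow> i \<le> n \<Longrightarrow> 1 \<le> j \<Longrightarrow> j \<le> n \<Longrightarrow>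
   ee n i j = aa i j + aa i (2*n - j)"
  apply (simp only: aa_refl)
  unfolding ee_def aa_def
  apply (cases "i = j")
   apply (cases "i = n"; simp)
  apply (cases "i = j + 1")
   apply (cases "i = n"; simp)
  apply (cases "j = i + 1")
   apply (cases "j = n"; simp)
  apply auto
  done

lemma aa_sym2: "i \<le> 2*n \<Longrightarrow> x \<le> 2*n \<Longrightarrow> aa (2*n - i) (2*n - x) = aa i x"
proof -
  assume a: "i \<le> 2*n" "x \<le> 2*n"
  have f1: "(2*n - i = 2*n - x) = (i = x)" using a by linarith
  have f2: "(2*n - i = 2*n - x + 1) = (x = i + 1)" using a by linarith
  have f3: "(2*n - x = 2*n - i + 1) = (i = x + 1)" using a by linarith
  show ?thesis unfolding aa_def f1 f2 f3 by auto
qed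

lemma ee_unfold: "n \<ge> 2 \<Longrightarrow> 1 \<le> i \<Longrightarrow> i < 2*n \<Longrightarrow> 1 \<le> j \<Longrightarrow> j < 2*n \<Longrightarrow>
   ee n (letter n i) (letter n j) = aa i j + aa i (2*n - j)"
proof -
  assume a: "n \<ge> 2" "1 \<le> i" "i < 2*n" "1 \<le> j" "j < 2*n"
  have gen: "ee n (letter n i) (letter n j) = aa (letter n i) j + aa (letter n i) (2*n - j)"
  proof (cases "j \<le> n")
    case True
    then show ?thesis using a c1[of n "letter n i" j] by (auto simp: letter_def)
  next
    case False
    then have l: "letter n j = 2*n - j" by (simp add: letter_def)
    have "2*n - (2*n - j) = j" using a by simp
    then show ?thesis using a False c1[of n "letter n i" "2*n - j"] l by (auto simp: letter_def)
  qed
  show ?thesis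
  proof (cases "i \<le> n")
    case True
    then show ?thesis using gen by (simp add: letter_def)
  next
    case False
    then have l: "letter n i = 2*n - i" by (simp add: letter_def)
    have "aa (2*n - i) j = aa i (2*n - j)"
      using aa_sym2[of i n "2*n - j"] a by simp
    moreover have "aa (2*n - i) (2*n - j) = aa i j"
      using aa_sym2[of i n j] a by simp
    ultimately show ?thesis using gen l by simp
  qed
qed

lemma sum_aa: "k \<le> Suc m \<Longrightarrow> sum_list (map (\<lambda>i. aa i j) [k..<Suc m]) =
   (if k \<le> j \<and> j \<le> m then 2 else 0) - (if j \<ge> 1 \<and> k \<le> j - 1 \<and> j - 1 \<le> m then 1 else 0)
   - (if k \<le> j + 1 \<and> j + 1 \<le> m then 1 else 0)"
proof (induction m)
  case 0
  then show ?case by (auto simp: aa_def)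
next
  case (Suc m)
  show ?case
  proof (cases "k = Suc (Suc m)")
    case True then show ?thesis by auto
  next
    case False
    then have "k \<le> Suc m" using Suc.prems by auto
    then show ?thesis using Suc.IH by (auto simp: aa_def)
  qed
qed

lemma step_arith:
  assumes "1 \<le> k" "k \<le> m" "Suc m < 2*n" "n \<ge> 2" "J = 2*n - Suc m"
  shows "(if m = 2*n - k then 2 else 1) +
    (((if k \<le> Suc m \<and> Suc m \<le> m then 2 else 0) - (if Suc m \<ge> 1 \<and> k \<le> Suc m - 1 \<and> Suc m - 1 \<le> m then 1 else 0)
   - (if k \<le> Suc m + 1 \<and> Suc m + 1 \<le> m then 1 else 0)) +
    ((if k \<le> J \<and> J \<le> m then 2 else 0) - (if J \<ge> 1 \<and> k \<le> J - 1 \<and> J - 1 \<le> m then 1 else 0)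
   - (if k \<le> J + 1 \<and> J + 1 \<le> m then 1 else 0))) + dd n (letter n (Suc m))
   = (if Suc m = 2*n - k then 2 else (1::int))"
proof -
  have b1: "(((if k \<le> Suc m \<and> Suc m \<le> m then 2 else 0) - (if Suc m \<ge> 1 \<and> k \<le> Suc m - 1 \<and> Suc m - 1 \<le> m then 1 else 0)
   - (if k \<le> Suc m + 1 \<and> Suc m + 1 \<le> m then 1 else 0))::int) = -1" using assms by simp
  consider (A) "Suc m < n" | (B) "Suc m = n" | (C) "Suc m > n" by linarith
  then show ?thesis
  proof cases
    case A
    have d: "dd n (letter n (Suc m)) = 1" using A by (simp add: dd_def letter_def)
    have "\<not> (J \<le> m)" "\<not> (J - 1 \<le> m)" "\<not> (J + 1 \<le> m)" "m \<noteq> 2*n - k" "Suc m \<noteq> 2*n - k"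
      using A assms by linarith+
    then show ?thesis using b1 d by simp
  next
    case B
    have d: "dd n (letter n (Suc m)) = 2" using B by (simp add: dd_def letter_def)
    have "\<not> (J \<le> m)" "J \<ge> 1" "k \<le> J - 1" "J - 1 \<le> m" "\<not> (J + 1 \<le> m)" "m \<noteq> 2*n - k" "Suc m \<noteq> 2*n - k"
      using B assms by linarith+
    then show ?thesis using b1 d by simp
  next
    case C
    have d: "dd n (letter n (Suc m)) = 1" using C assms by (simp add: dd_def letter_def)
    have u: "J \<le> m" "J \<ge> 1" "J - 1 \<le> m" "J + 1 \<le> m" using C assms by linarith+
    consider (C1) "k + 1 \<le> J" | (C2) "k = J" | (C3) "k = J + 1" | (C4) "k > J + 1" by linarith
    then show ?thesis
    proof cases
      case C1
      have "m \<noteq> 2*n - k" "Suc m \<noteq> 2*n - k" "k \<le> J - 1" using C1 assms C by linarith+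
      then show ?thesis using b1 d u C1 by simp
    next
      case C2
      have "m \<noteq> 2*n - k" "Suc m = 2*n - k" "\<not> k \<le> J - 1" using C2 assms C u by linarith+
      then show ?thesis using b1 d u C2 by simp
    next
      case C3
      have "m = 2*n - k" "Suc m \<noteq> 2*n - k" using C3 assms C by linarith+
      then show ?thesis using b1 d u C3 by simp
    next
      case C4
      have "m \<noteq> 2*n - k" "Suc m \<noteq> 2*n - k" using C4 assms C by linarith+
      then show ?thesis using b1 d u C4 by simp
    qed
  qed
qed

lemma letter_range: "1 \<le> i \<Longrightarrow> i < 2*n \<Longrightarrow> 1 \<le> letter n i \<and> letter n i \<le> n"
  unfolding letter_def by auto

lemma letter_n: "i < 2*n \<Longrightarrow> (letter n i = n) = (i = n)"
  unfolding letter_def by auto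

theorem lemma3p3:
  fixes chi :: "nat \<Rightarrow> 'g::ab_group_add \<Rightarrow> 'k::field"
    and g :: "nat \<Rightarrow> 'g" and n :: nat and q :: 'k
  assumes n2: "n \<ge> 2"
    and chars: "\<And>i. 1 \<le> i \<Longrightarrow> i \<le> n \<Longrightarrow> is_character (chi i)"
    and q0: "q \<noteq> 0"
    and diag: "\<And>i. 1 \<le> i \<Longrightarrow> i < n \<Longrightarrow> chi i (g i) = q"
    and diagn: "chi n (g n) = q ^ 2"
    and adj: "\<And>i. 1 < i \<Longrightarrow> i < n \<Longrightarrow> chi i (g (i - 1)) * chi (i - 1) (g i) = inverse q"
    and adjn: "chi (n - 1) (g n) * chi n (g (n - 1)) = inverse (q ^ 2)"
    and far: "\<And>i j. 1 \<le> i \<Longrightarrow> j \<le> n \<Longrightarrow> j > i + 1 \<Longrightarrow> chi i (g j) * chi j (g i) = 1"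
    and km: "1 \<le> k" "k \<le> m" "m < 2 * n"
  shows "pw chi g (vw n k m) (vw n k m) = (if m = phi n k then q ^ 2 else q)"
proof -
  define P where "P x y = chi x (g y)" for x y
  have Pd: "P x x = q powi dd n x" if "1 \<le> x" "x \<le> n" for x
    using that diag[of x] diagn unfolding P_def dd_def
    by (cases "x = n") (auto simp: power_int_numeral)
  have Po: "P x y * P y x = q powi ee n x y" if x: "1 \<le> x" "x \<le> n" and y: "1 \<le> y" "y \<le> n" for x y
  proof -
    consider (eq) "x = y" | (n1) "x = n - 1 \<and> y = n" | (n2) "y = n - 1 \<and> x = n"
      | (s1) "x = y + 1" "\<not> (y = n - 1 \<and> x = n)" | (s2) "y = x + 1" "\<not> (x = n - 1 \<and> y = n)"
      | (fa1) "y > x + 1" | (fa2) "x > y + 1" by linarith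
    then show ?thesis
    proof cases
      case eq
      then show ?thesis using Pd[OF x] q0 unfolding ee_def dd_def
        by (auto simp: power_int_numeral eval_nat_numeral mult_ac split: if_splits)
    next
      case n1
      then show ?thesis using adjn assms(1) unfolding ee_def P_def
        by (auto simp: power_int_minus power_int_numeral)
    next
      case n2
      then show ?thesis using adjn assms(1) unfolding ee_def P_def
        by (auto simp: power_int_minus power_int_numeral mult.commute)
    next
      case s1
      have "chi x (g (x - 1)) * chi (x - 1) (g x) = inverse q" using s1 x y by (intro adj) auto
      then show ?thesis using s1 x y unfolding ee_def P_def
        by (auto simp: power_int_minus)
    next
      case s2
      have "chi y (g (y - 1)) * chi (y - 1) (g y) = inverse q" using s2 x y by (intro adj) auto
      then show ?thesis using s2 x y unfolding ee_def P_def
        by (auto simp: power_int_minus mult.commute)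
    next
      case fa1
      have "chi x (g y) * chi y (g x) = 1" using fa1 x y by (intro far) auto
      then show ?thesis using fa1 unfolding ee_def P_def by auto
    next
      case fa2
      have "chi y (g x) * chi x (g y) = 1" using fa2 x y by (intro far) auto
      then show ?thesis using fa2 unfolding ee_def P_def by (auto simp: mult.commute)
    qed
  qed
  define t where "t m = (if m = 2*n - k then 2 else (1::int))" for m
  have main: "prod_list (map (\<lambda>x. prod_list (map (\<lambda>y. P x y) (vw n k m))) (vw n k m)) = q powi t m"
    if "k \<le> m" "m < 2*n" for m
    using that
  proof (induction m)
    case 0
    then show ?case using km by simp
  next
    case (Suc m)
    show ?case
    proof (cases "k = Suc m")
      case True
      have v: "vw n k (Suc m) = [letter n k]" using True by (simp add: vw_def)
      have r: "1 \<le> letter n k \<and> letter n k \<le> n" using letter_range km True Suc.prems by auto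
      have "dd n (letter n k) = t (Suc m)"
        using letter_n[of k n] Suc.prems True unfolding dd_def t_def by auto
      then show ?thesis using v Pd r by simp
    next
      case False
      then have km': "k \<le> m" using Suc.prems by simp
      define b where "b = letter n (Suc m)"
      have v: "vw n k (Suc m) = vw n k m @ [b]" using km' by (simp add: vw_def b_def)
      have br: "1 \<le> b \<and> b \<le> n" using letter_range[of "Suc m" n] Suc.prems unfolding b_def by auto
      have IH: "prod_list (map (\<lambda>x. prod_list (map (\<lambda>y. P x y) (vw n k m))) (vw n k m)) = q powi t m"
        using Suc.IH km' Suc.prems by simp
      have "prod_list (map (\<lambda>x. P x b * P b x) (vw n k m))
          = prod_list (map (\<lambda>i. q powi (aa i (Suc m) + aa i (2*n - Suc m))) [k..<Suc m])"
        unfolding vw_def map_map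
      proof (rule arg_cong[where f = prod_list], rule map_cong[OF refl])
        fix i assume "i \<in> set [k..<Suc m]"
        then have i: "k \<le> i" "i \<le> m" by auto
        have ir: "1 \<le> letter n i \<and> letter n i \<le> n" using letter_range[of i n] i km Suc.prems by auto
        show "((\<lambda>x. P x b * P b x) \<circ> letter n) i = q powi (aa i (Suc m) + aa i (2*n - Suc m))"
          using Po[of "letter n i" b] ir br ee_unfold[of n i "Suc m"] n2 i km Suc.prems
          unfolding b_def by simp
      qed
      also have "\<dots> = q powi (sum_list (map (\<lambda>i. aa i (Suc m)) [k..<Suc m]) + sum_list (map (\<lambda>i. aa i (2*n - Suc m)) [k..<Suc m]))"
        using q0 by (simp add: powi_list sum_list_addf)
      finally have S: "prod_list (map (\<lambda>x. P x b * P b x) (vw n k m)) = q powi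
         (sum_list (map (\<lambda>i. aa i (Suc m)) [k..<Suc m]) + sum_list (map (\<lambda>i. aa i (2*n - Suc m)) [k..<Suc m]))" .
      have ar: "t m + (sum_list (map (\<lambda>i. aa i (Suc m)) [k..<Suc m]) + sum_list (map (\<lambda>i. aa i (2*n - Suc m)) [k..<Suc m]))
          + dd n b = t (Suc m)"
        unfolding t_def b_def sum_aa[OF le_SucI[OF km']]
        by (rule step_arith) (use km km' Suc.prems n2 in auto)
      have "prod_list (map (\<lambda>x. prod_list (map (\<lambda>y. P x y) (vw n k (Suc m)))) (vw n k (Suc m)))
          = q powi t m * q powi (sum_list (map (\<lambda>i. aa i (Suc m)) [k..<Suc m]) + sum_list (map (\<lambda>i. aa i (2*n - Suc m)) [k..<Suc m]))
            * q powi dd n b"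
        unfolding v Q_snoc IH S using Pd br by simp
      also have "\<dots> = q powi t (Suc m)"
        using q0 ar by (simp add: power_int_add[symmetric])
      finally show ?thesis .
    qed
  qed
  have chs: "\<forall>x\<in>set (vw n k m). is_character (chi x)"
    using letter_range[of _ n] km chars unfolding vw_def by auto
  have "pw chi g (vw n k m) (vw n k m) = q powi t m"
    using main[OF km(2,3)] pw_expand[OF chs] unfolding P_def by simp
  then show ?thesis unfolding t_def phi_def by simp
qed

end
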